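(* Let $\mathcal{C}^1, \mathcal{C}^2 \subset \mathbb{R}^l$, $p^1 \neq p^2$, and the growth distance algorithm be as described in the context, producing lower bounds $\beta^l_k > 0$ and upper bounds $\beta^u_k \in (0, \infty]$ on the ray intersection value. Then the relative gap $\beta^u_k/\beta^l_k - 1$ is monotonically decreasing (non-increasing) in $k$ over the iterations executed by the algorithm.
   Context: A proper convex (PC) set is a compact convex subset of $\mathbb{R}^l$ with nonempty interior. For compact convex $\mathcal{C}$: $B_r(x)$ is the closed Euclidean ball; inradius $r(\mathcal{C}, x) = \max\{r \ge 0 : B_r(x) \subset \mathcal{C}\}$; support function $s_v[\mathcal{C}](\lambda) = \max_{z \in \mathcal{C}} \langle \lambda, z\rangle$; support point function $s_p[\mathcal{C}](\lambda)$ is any (arbitrary) selection from $\arg\max_{z \in \mathcal{C}}\langle \lambda, z\rangle$. Setting: $\mathcal{C}^1$ is a PC set, $\mathcal{C}^2 \ne \emptyset$ compact convex, $p^1 \in \operatorname{int}\mathcal{C}^1$, $p^2 \in \mathcal{C}^2$, $p^1 \ne p^2$, $\underline r = r(\mathcal{C}^1,p^1) + r(\mathcal{C}^2,p^2)$. Let $p = p^2 - p^1$ and $\mathcal{C} = \mathcal{C}^1 - \mathcal{C}^2 + \{p\}$, so $B_{\underline r}(0) \subset \mathcal{C}$; $s_v[\mathcal{C}](\lambda) = s_v[\mathcal{C}^1](\lambda) + s_v[\mathcal{C}^2](-\lambda) + \langle\lambda, p\rangle$, $s_p[\mathcal{C}](\lambda) = s_p[\mathcal{C}^1](\lambda) -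 s_p[\mathcal{C}^2](-\lambda) + p$. The ray intersection problem is: maximize $\beta$ subject to $z \in \mathcal{C}$, $z = \beta p$. Algorithm. Initialization ($k=0$): $M^o_0 = \emptyset$, $\beta^u_0 = \infty$; $M^i_0 = \{-l+1,\dots,0\}$; choose $l-1$ linearly independent unit vectors $p^\perp_m$ orthogonal to $p$ and set $z_m = K p^\perp_m + \epsilon p/\|p\|$ ($m=-l+1,\dots,-1$), $z_0 = l\epsilon p/\|p\| - \sum_{m=-l+1}^{-1} z_m$, with $\epsilon, K > 0$ such that $\|z_m\| \le \underline r$; $M^{i*}_0 = M^i_0$, $\beta^l_0 = \epsilon/\|p\|$, $\lambda_0 = p/\|p\|_\infty$. Iteration $k \ge 1$: $z_k = s_p[\mathcal{C}](\lambda_{k-1})$, $v_k = s_v[\mathcal{C}](\lambda_{k-1})$. Outer update: $M^o_k = \{m^*\}$ with $m^* \in \arg\min_{m \in M^o_{k-1}\cup\{k\}} v_m/\langle\lambda_{m-1},p\rangle$, and $\beta^u_k = \min\{\beta^u_{k-1}, v_k/\langle\lambda_{k-1},p\rangle\}$. Inner update: $M^i_k = M^i_{k-1}\cup\{k\}$; solve the LP $\min \sum_{m\in M^i_k}\nu_m$ s.t. $\sum_{m\in M^i_k}\nu_m z_m = p$, $\nu \ge 0$ by the primal Simplex method started from basis $M^{i*}_{k-1}$ (most-negative reduced cost entering rule, minimum-ratio leaving rule, Bland's anti-cycling rule), obtaining optimal basis $M^{i*}_k$ and optimal value $(\beta^l_k)^{-1}$; optionally prune $M^i_k$ to any subset containing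 $M^{i*}_k$; set $\lambda_k = Z^{-\top}\mathbf{1}$ with $Z = [z_{m_1}\cdots z_{m_l}]$, $\{m_1,\dots,m_l\} = M^{i*}_k$, then $\lambda_k \leftarrow \lambda_k/\|\lambda_k\|_\infty$. Stop when $\beta^u_k/\beta^l_k - 1 < \epsilon_{tol}$ or $k = K_{max}$. *)

theory Defs
  imports "HOL-Analysis.Analysis"
begin

definition proper_convex :: "'a::euclidean_space set \<Rightarrow> bool" where
  "proper_convex C \<longleftrightarrow> compact C \<and> convex C \<and> interior C \<noteq> {}"

definition inradius :: "'a::euclidean_space set \<Rightarrow> 'a \<Rightarrow> real" where
  "inradius C x = Sup {r. 0 \<le> r \<and> cball x r \<subseteq> C}"

definition support_value :: "'a::euclidean_space set \<Rightarrow> 'a \<Rightarrow> real" where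
  "support_value C lam = Sup ((\<lambda>z. lam \<bullet> z) ` C)"

text \<open>The set of maximisers, from which a support point s_p[C](lambda) is selected.\<close>
definition support_points :: "'a::euclidean_space set \<Rightarrow> 'a \<Rightarrow> 'a set" where
  "support_points C lam = {z \<in> C. \<forall>y\<in>C. lam \<bullet> y \<le> lam \<bullet> z}"

text \<open>Feasibility for the LP  min sum nu_m  s.t. sum nu_m z_m = p, nu >= 0, over index set M.\<close>
definition lp_feasible :: "(int \<Rightarrow> 'a::euclidean_space) \<Rightarrow> int set \<Rightarrow> 'a \<Rightarrow> (int \<Rightarrow> real) \<Rightarrow> bool" where
  "lp_feasible z M p \<nu> \<longleftrightarrow> (\<forall>m\<in>M. 0 \<le> \<nu> m) \<and> (\<Sum>m\<in>M. \<nu> m *\<^sub>R z m) = p"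

definition lp_optimal_basis ::
  "(int \<Rightarrow> 'a::euclidean_space) \<Rightarrow> int set \<Rightarrow> 'a \<Rightarrow> int set \<Rightarrow> real \<Rightarrow> bool" where
  "lp_optimal_basis z M p B val \<longleftrightarrow>
     B \<subseteq> M \<and> card B = DIM('a) \<and> inj_on z B \<and> independent (z ` B) \<and>
     (\<exists>\<nu>. lp_feasible z B p \<nu> \<and> (\<Sum>m\<in>B. \<nu> m) = val) \<and>
     (\<forall>\<nu>. lp_feasible z M p \<nu> \<longrightarrow> val \<le> (\<Sum>m\<in>M. \<nu> m))"

end

theory Submission
  imports Defs
begin

lemma ereal_step:
  fixes x y :: ereal and c d :: real
  assumes "0 \<le> x" "x \<le> y" "0 < d" "d \<le> c"
  shows "x / ereal c - 1 \<le> y / ereal d - 1"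
proof -
  have "x / ereal c \<le> y / ereal d"
    using assms
    apply (cases x; cases y)
    apply (auto simp: frac_le)
    done
  then show ?thesis by (simp add: ereal_minus_mono)
qed

lemma sv_ge:
  fixes C :: "'a::euclidean_space set"
  assumes "compact C" "x \<in> C"
  shows "lam \<bullet> x \<le> support_value C lam"
proof -
  have "compact ((\<lambda>z. lam \<bullet> z) ` C)"
    by (rule compact_continuous_image) (auto intro: continuous_intros assms)
  then have "bdd_above ((\<lambda>z. lam \<bullet> z) ` C)" by (simp add: bounded_imp_bdd_above compact_imp_bounded)
  then show ?thesis unfolding support_value_def using assms(2) by (auto intro: cSup_upper)
qed

lemma basis_pos:
  assumes "lp_optimal_basis z M p B val" "p \<noteq> 0"
  shows "val > 0"
proof -
  obtain \<nu> where f: "lp_feasible z B p \<nu>" "(\<Sum>m\<in>B. \<nu> m) = val"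
    using assms unfolding lp_optimal_basis_def by blast
  have fin: "finite B" using assms(1) unfolding lp_optimal_basis_def
    by (metis DIM_positive card.infinite less_irrefl)
  have nn: "\<forall>m\<in>B. 0 \<le> \<nu> m" using f unfolding lp_feasible_def by blast
  have "val \<ge> 0" using f(2) nn by (metis sum_nonneg)
  moreover have "val \<noteq> 0"
  proof
    assume "val = 0"
    then have "\<forall>m\<in>B. \<nu> m = 0" using sum_nonneg_eq_0_iff[OF fin] nn f(2) by blast
    then have "p = 0" using f(1) unfolding lp_feasible_def by simp
    then show False using assms by simp
  qed
  ultimately show ?thesis by simp
qed

lemma lam_pos:
  assumes "lp_optimal_basis z M p B val" "p \<noteq> 0" "\<forall>m\<in>B. \<mu> \<bullet> z m = 1"
  shows "(\<mu> /\<^sub>R infnorm \<mu>) \<bullet> p > 0"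
proof -
  obtain \<nu> where f: "lp_feasible z B p \<nu>" "(\<Sum>m\<in>B. \<nu> m) = val"
    using assms unfolding lp_optimal_basis_def by blast
  have "\<mu> \<bullet> p = (\<Sum>m\<in>B. \<nu> m * (\<mu> \<bullet> z m))"
    using f(1) unfolding lp_feasible_def by (auto simp: inner_sum_right)
  also have "\<dots> = val" using assms(3) f(2) by simp
  finally have mp: "\<mu> \<bullet> p > 0" using basis_pos[OF assms(1,2)] by simp
  then have "\<mu> \<noteq> 0" by auto
  then have "infnorm \<mu> > 0" by (simp add: infnorm_pos_lt)
  then show ?thesis using mp by simp
qed

theorem theorem2:
  fixes C1 C2 :: "'a::euclidean_space set"
    and p1 p2 :: 'a
    and rlow \<epsilon> K :: real
    and pperp :: "int \<Rightarrow> 'a"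
    and z :: "int \<Rightarrow> 'a"
    and v :: "nat \<Rightarrow> real"
    and lam :: "nat \<Rightarrow> 'a"
    and betau :: "nat \<Rightarrow> ereal"
    and betal :: "nat \<Rightarrow> real"
    and Mo :: "nat \<Rightarrow> nat set"
    and Mi Mistar :: "nat \<Rightarrow> int set"
    and N Kmax :: nat
    and tol :: real
  assumes C1: "proper_convex C1"
    and C2: "C2 \<noteq> {}" "compact C2" "convex C2"
    and p1: "p1 \<in> interior C1"
    and p2: "p2 \<in> C2"
    and p12: "p1 \<noteq> p2"
    and rlow: "rlow = inradius C1 p1 + inradius C2 p2"
    \<comment> \<open>initialization, k = 0 (with p = p2 - p1, l = DIM('a))\<close>
    and init_eps: "\<epsilon> > 0" and init_K: "K > 0"
    and init_perp: "\<forall>m\<in>{- int DIM('a) + 1 .. -1}.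
                       norm (pperp m) = 1 \<and> pperp m \<bullet> (p2 - p1) = 0"
    and init_perp_inj: "inj_on pperp {- int DIM('a) + 1 .. -1}"
    and init_perp_indep: "independent (pperp ` {- int DIM('a) + 1 .. -1})"
    and init_z: "\<forall>m\<in>{- int DIM('a) + 1 .. -1}.
                   z m = K *\<^sub>R pperp m + (\<epsilon> / norm (p2 - p1)) *\<^sub>R (p2 - p1)"
    and init_z0: "z 0 = (real DIM('a) * \<epsilon> / norm (p2 - p1)) *\<^sub>R (p2 - p1)
                         - (\<Sum>m\<in>{- int DIM('a) + 1 .. -1}. z m)"
    and init_znorm: "\<forall>m\<in>{- int DIM('a) + 1 .. 0}. norm (z m) \<le> rlow"
    and init_Mo: "Mo 0 = {}"
    and init_bu: "betau 0 = \<infinity>"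
    and init_Mi: "Mi 0 = {- int DIM('a) + 1 .. 0}"
    and init_Mistar: "Mistar 0 = Mi 0"
    and init_bl: "betal 0 = \<epsilon> / norm (p2 - p1)"
    and init_lam: "lam 0 = (p2 - p1) /\<^sub>R infnorm (p2 - p1)"
    \<comment> \<open>iterations k = 1, ..., N\<close>
    and it_z: "\<forall>k. 1 \<le> k \<and> k \<le> N \<longrightarrow>
                 (\<exists>a b. a \<in> support_points C1 (lam (k - 1)) \<and>
                        b \<in> support_points C2 (- lam (k - 1)) \<and>
                        z (int k) = a - b + (p2 - p1))"
    and it_v: "\<forall>k. 1 \<le> k \<and> k \<le> N \<longrightarrow>
                 v k = support_value C1 (lam (k - 1)) + support_value C2 (- lam (k - 1))
                       + lam (k - 1) \<bullet> (p2 - p1)"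
    and it_Mo: "\<forall>k. 1 \<le> k \<and> k \<le> N \<longrightarrow>
                 (\<exists>mstar. Mo k = {mstar} \<and> mstar \<in> Mo (k - 1) \<union> {k} \<and>
                    (\<forall>m\<in>Mo (k - 1) \<union> {k}.
                       v mstar / (lam (mstar - 1) \<bullet> (p2 - p1))
                         \<le> v m / (lam (m - 1) \<bullet> (p2 - p1))))"
    and it_bu: "\<forall>k. 1 \<le> k \<and> k \<le> N \<longrightarrow>
                 betau k = min (betau (k - 1)) (ereal (v k / (lam (k - 1) \<bullet> (p2 - p1))))"
    and it_basis: "\<forall>k. 1 \<le> k \<and> k \<le> N \<longrightarrow>
                 lp_optimal_basis z (Mi (k - 1) \<union> {int k}) (p2 - p1) (Mistar k)
                   (inverse (betal k))"
    and it_prune: "\<forall>k. 1 \<le> k \<and> k \<le> N \<longrightarrow>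
                 Mistar k \<subseteq> Mi k \<and> Mi k \<subseteq> Mi (k - 1) \<union> {int k}"
    and it_lam: "\<forall>k. 1 \<le> k \<and> k \<le> N \<longrightarrow>
                 (\<exists>\<mu>. (\<forall>m\<in>Mistar k. \<mu> \<bullet> z m = 1) \<and> lam k = \<mu> /\<^sub>R infnorm \<mu>)"
    \<comment> \<open>stopping rule: iterations 1..N are exactly those executed\<close>
    and tol: "tol > 0"
    and stop_N: "N \<le> Kmax"
    and stop_not: "\<forall>k. 1 \<le> k \<and> k < N \<longrightarrow>
                 \<not> (betau k / ereal (betal k) - 1 < ereal tol)"
  shows "\<forall>j k. j \<le> k \<and> k \<le> N \<longrightarrow>
           betau k / ereal (betal k) - 1 \<le> betau j / ereal (betal j) - 1"
proof -
  define p where "p = p2 - p1"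
  have p0: "p \<noteq> 0" using p12 by (simp add: p_def)
  have pn: "norm p > 0" using p0 by simp
  have finMi: "k \<le> N \<Longrightarrow> finite (Mi k)" for k
  proof (induction k)
    case 0 then show ?case using init_Mi by simp
  next
    case (Suc k)
    have "Mi (Suc k) \<subseteq> Mi k \<union> {int (Suc k)}" using it_prune Suc.prems
      by (metis diff_Suc_1 le_add1 plus_1_eq_Suc)
    moreover have "finite (Mi k)" using Suc by simp
    ultimately show ?case using finite_subset by blast
  qed
  have wit: "k \<le> N \<Longrightarrow> \<exists>\<nu>. lp_feasible z (Mi k) p \<nu> \<and> (\<Sum>m\<in>Mi k. \<nu> m) = inverse (betal k)" for k
  proof (cases k)
    case 0
    define S where "S = {- int DIM('a) + 1 .. 0}"
    define c where "c = norm p / (real DIM('a) * \<epsilon>)"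
    have S: "S = insert 0 {- int DIM('a) + 1 .. -1}" unfolding S_def by auto
    have cardS: "card S = DIM('a)" unfolding S_def by simp
    have sz: "(\<Sum>m\<in>S. z m) = (real DIM('a) * \<epsilon> / norm p) *\<^sub>R p"
      unfolding S using init_z0 by (simp add: p_def)
    have "(\<Sum>m\<in>S. c *\<^sub>R z m) = c *\<^sub>R (\<Sum>m\<in>S. z m)" by (simp add: scaleR_sum_right)
    also have "\<dots> = p" using sz pn init_eps unfolding c_def by simp
    finally have f: "(\<Sum>m\<in>S. c *\<^sub>R z m) = p" .
    have "(\<Sum>m\<in>S. c) = inverse (betal 0)"
      using cardS init_bl pn init_eps unfolding c_def p_def by simp
    moreover have "c \<ge> 0" unfolding c_def using init_eps pn by simp
    ultimately show ?thesis using f 0 init_Mi unfolding lp_feasible_def S_def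
      by (intro exI[of _ "\<lambda>_. c"]) simp
  next
    case (Suc j)
    assume kN: "k \<le> N"
    then have ob: "lp_optimal_basis z (Mi (k - 1) \<union> {int k}) p (Mistar k) (inverse (betal k))"
      using it_basis Suc \<open>k \<le> N\<close> unfolding p_def by (metis Suc_le_mono le0 One_nat_def)
    have sub: "Mistar k \<subseteq> Mi k" using it_prune Suc kN by simp
    obtain \<nu> where f: "lp_feasible z (Mistar k) p \<nu>" "(\<Sum>m\<in>Mistar k. \<nu> m) = inverse (betal k)"
      using ob unfolding lp_optimal_basis_def by blast
    define \<nu>' where "\<nu>' m = (if m \<in> Mistar k then \<nu> m else 0)" for m
    have fin: "finite (Mi k)" using finMi kN by simp
    have "(\<Sum>m\<in>Mi k. \<nu>' m *\<^sub>R z m) = (\<Sum>m\<in>Mistar k. \<nu> m *\<^sub>R z m)"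
      unfolding \<nu>'_def by (rule sum.mono_neutral_cong_right[OF fin sub]) auto
    moreover have "(\<Sum>m\<in>Mi k. \<nu>' m) = (\<Sum>m\<in>Mistar k. \<nu> m)"
      unfolding \<nu>'_def by (rule sum.mono_neutral_cong_right[OF fin sub]) auto
    ultimately show ?thesis using f unfolding lp_feasible_def
      by (intro exI[of _ \<nu>']) (auto simp: \<nu>'_def)
  qed
  have blpos: "k \<le> N \<Longrightarrow> betal k > 0" for k
  proof (cases k)
    case 0 then show ?thesis using init_bl init_eps pn by (simp add: p_def)
  next
    case (Suc j)
    assume "k \<le> N"
    then have "lp_optimal_basis z (Mi (k - 1) \<union> {int k}) p (Mistar k) (inverse (betal k))"
      using it_basis Suc \<open>k \<le> N\<close> unfolding p_def by (metis Suc_le_mono le0 One_nat_def)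
    then have "inverse (betal k) > 0" using basis_pos p0 by blast
    then show ?thesis by simp
  qed
  have blmono: "1 \<le> k \<Longrightarrow> k \<le> N \<Longrightarrow> betal (k - 1) \<le> betal k" for k
  proof -
    assume k: "1 \<le> k" "k \<le> N"
    then have ob: "lp_optimal_basis z (Mi (k - 1) \<union> {int k}) p (Mistar k) (inverse (betal k))"
      using it_basis p_def by simp
    obtain \<nu> where f: "lp_feasible z (Mi (k - 1)) p \<nu>" "(\<Sum>m\<in>Mi (k - 1). \<nu> m) = inverse (betal (k - 1))"
      using wit[of "k - 1"] k by (meson diff_le_self order_trans)
    define M where "M = Mi (k - 1) \<union> {int k}"
    define \<nu>' where "\<nu>' m = (if m \<in> Mi (k - 1) then \<nu> m else 0)" for m
    have sub: "Mi (k - 1) \<subseteq> M" unfolding M_def by auto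
    have fin: "finite M" unfolding M_def using finMi k by simp
    have "(\<Sum>m\<in>M. \<nu>' m *\<^sub>R z m) = (\<Sum>m\<in>Mi (k - 1). \<nu> m *\<^sub>R z m)"
      unfolding \<nu>'_def by (rule sum.mono_neutral_cong_right[OF fin sub]) auto
    moreover have s: "(\<Sum>m\<in>M. \<nu>' m) = (\<Sum>m\<in>Mi (k - 1). \<nu> m)"
      unfolding \<nu>'_def by (rule sum.mono_neutral_cong_right[OF fin sub]) auto
    ultimately have "lp_feasible z M p \<nu>'" using f unfolding lp_feasible_def by (auto simp: \<nu>'_def)
    then have "inverse (betal k) \<le> (\<Sum>m\<in>M. \<nu>' m)" using ob unfolding lp_optimal_basis_def M_def by blast
    then have "inverse (betal k) \<le> inverse (betal (k - 1))" using s f(2) by simp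
    then show ?thesis using blpos[of k] blpos[of "k - 1"] k by simp
  qed
  have lampos: "k < N \<Longrightarrow> lam k \<bullet> p > 0" for k
  proof (cases k)
    case 0
    have "infnorm p > 0" using p0 by (simp add: infnorm_pos_lt)
    then show ?thesis using 0 init_lam p0 unfolding p_def[symmetric] by (simp add: inner_commute)
  next
    case (Suc j)
    assume "k < N"
    then have ob: "lp_optimal_basis z (Mi (k - 1) \<union> {int k}) p (Mistar k) (inverse (betal k))"
      using it_basis Suc \<open>k < N\<close> unfolding p_def by (metis Suc_le_mono le0 One_nat_def less_imp_le)
    obtain \<mu> where "\<forall>m\<in>Mistar k. \<mu> \<bullet> z m = 1" "lam k = \<mu> /\<^sub>R infnorm \<mu>"
    proof -
      have "1 \<le> k" "k \<le> N" using Suc \<open>k < N\<close> by auto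
      then show ?thesis using it_lam that by blast
    qed
    then show ?thesis using lam_pos[OF ob p0] by simp
  qed
  have vpos: "1 \<le> k \<Longrightarrow> k \<le> N \<Longrightarrow> v k \<ge> 0" for k
  proof -
    assume k: "1 \<le> k" "k \<le> N"
    have a: "lam (k - 1) \<bullet> p1 \<le> support_value C1 (lam (k - 1))"
      using sv_ge[of C1 p1] C1 p1 interior_subset unfolding proper_convex_def by blast
    have b: "(- lam (k - 1)) \<bullet> p2 \<le> support_value C2 (- lam (k - 1))"
      using sv_ge[of C2 p2] C2 p2 by blast
    show ?thesis using it_v k a b by (simp add: inner_diff_right)
  qed
  have bupos: "k \<le> N \<Longrightarrow> betau k \<ge> 0" for k
  proof (induction k)
    case 0 then show ?case using init_bu by simp
  next
    case (Suc k)
    have "v (Suc k) / (lam k \<bullet> p) \<ge> 0" using vpos[of "Suc k"] lampos[of k] Suc.prems by simp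
    then show ?case using it_bu Suc p_def by simp
  qed
  have stepk: "1 \<le> k \<Longrightarrow> k \<le> N \<Longrightarrow>
      betau k / ereal (betal k) - 1 \<le> betau (k - 1) / ereal (betal (k - 1)) - 1" for k
  proof -
    assume k: "1 \<le> k" "k \<le> N"
    have h2: "betau k \<le> betau (k - 1)" using it_bu k by simp
    have h1: "0 \<le> betau k" using bupos k by simp
    have h3: "0 < betal (k - 1)" using blpos k by simp
    have h4: "betal (k - 1) \<le> betal k" using blmono k by simp
    show ?thesis by (rule ereal_step[OF h1 h2 h3 h4])
  qed
  show ?thesis
  proof (intro allI impI)
    fix j k assume jk: "j \<le> k \<and> k \<le> N"
    then have "j \<le> k" "k \<le> N" by auto
    then show "betau k / ereal (betal k) - 1 \<le> betau j / ereal (betal j) - 1"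
    proof (induction k rule: dec_induct)
      case base then show ?case by simp
    next
      case (step i)
      have "betau (Suc i) / ereal (betal (Suc i)) - 1 \<le> betau i / ereal (betal i) - 1"
        using stepk[of "Suc i"] step.hyps(2) step.prems by simp
      then show ?case using step.IH step.prems by (meson order_trans Suc_leD)
    qed
  qed
qed

end
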